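(* Let $R$ be a commutative ring, $\mathcal{M}$ a nonempty set, $X$ a set, $A(X)$ the free $\mathcal{M}$-algebra over $R$ on $X$, and $F=\bigoplus_{x\in X}Rx$. Let $A$ be an $\mathcal{M}$-algebra over $R$ containing a copy of $F$ as an $R$-submodule (so elements of $X$ are viewed as elements of $A$), and suppose that $F$ generates $A$ as an $\mathcal{M}$-algebra. Let $\operatorname{Aut}(A,F)=\{\theta\in\operatorname{Aut}(A)\mid\theta(F)=F\}$ and $\operatorname{Aut}(A(X),F)=\{\varphi\in\operatorname{Aut}(A(X))\mid\varphi(F)=F\}$. Then: (i) The map $\operatorname{Aut}(A,F)\to\operatorname{Aut}(A(X),F)$, $\theta\mapsto\widetilde{\theta}:=\widetilde{\theta|_F}$, where $\widetilde{\theta|_F}$ is the unique $\mathcal{M}$-algebra endomorphism of $A(X)$ extending $x\mapsto\theta(x)$ for $x\in X$, is a group monomorphism. (ii) There exists a unique surjective $\mathcal{M}$-algebra homomorphism $\eta\colon A(X)\to A$ that is the identity on $X$. (iii) Letting $I=\ker\eta$, the image of the map in (i) consists exactly of those $\varphi\in\operatorname{Aut}(A(X),F)$ with $\varphi(I)=I$.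
   Context: An $\mathcal{M}$-algebra over $R$ is an $R$-module $A$ together with a family of $R$-bilinear maps $A\times A\to A$, $(a,b)\mapsto a_m b$, indexed by $m\in\mathcal{M}$; homomorphisms are $R$-linear maps preserving all $m$-products, and $\operatorname{Aut}(A)$ is the group of $\mathcal{M}$-algebra automorphisms. A subset generates $A$ if the smallest $R$-submodule containing it and closed under all $m$-products is $A$. The free $\mathcal{M}$-magma $M(X)$ is defined by $M^1(X)=X$, $M^k(X)=\coprod_{1\le j<k,\ m\in\mathcal{M}} M^j(X)\times\{m\}\times M^{k-j}(X)$, $M(X)=\coprod_{k\ge1}M^k(X)$, $a_m b=(a,m,b)$; the free $\mathcal{M}$-algebra $A(X)$ is the free $R$-module on $M(X)$ with bilinearly extended $m$-products, and it satisfies: every set map from $X$ to an $\mathcal{M}$-algebra extends uniquely to an $\mathcal{M}$-algebra homomorphism from $A(X)$. Here $F=\bigoplus_{x\in X}Rx\subset A(X)$. *)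

theory Defs
  imports Main "HOL-Library.Poly_Mapping"
begin

(* Free M-magma on X: the index set M is the type 'm, the generating set X is the type 'x *)
datatype ('x, 'm) magma = Gen 'x | Op "('x, 'm) magma" 'm "('x, 'm) magma"

(* Free M-algebra A(X): the free R-module on M(X), i.e. finitely supported maps M(X) -> R *)
type_synonym ('x, 'm, 'r) freealg = "('x, 'm) magma \<Rightarrow>\<^sub>0 'r"

definition fsmult :: "'r::comm_ring_1 \<Rightarrow> ('x, 'm, 'r) freealg \<Rightarrow> ('x, 'm, 'r) freealg" where
  "fsmult r f = Poly_Mapping.map (\<lambda>c. r * c) f"

definition fmult :: "'m \<Rightarrow> ('x, 'm, 'r::comm_ring_1) freealg \<Rightarrow> ('x, 'm, 'r) freealg \<Rightarrow> ('x, 'm, 'r) freealg" where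
  "fmult m f g = (\<Sum>s\<in>Poly_Mapping.keys f. \<Sum>t\<in>Poly_Mapping.keys g. Poly_Mapping.single (Op s m t) (Poly_Mapping.lookup f s * Poly_Mapping.lookup g t))"

definition fgen :: "'x \<Rightarrow> ('x, 'm, 'r::comm_ring_1) freealg" where
  "fgen x = Poly_Mapping.single (Gen x) 1"

definition Malg :: "('r::comm_ring_1 \<Rightarrow> 'a::ab_group_add \<Rightarrow> 'a) \<Rightarrow> ('m \<Rightarrow> 'a \<Rightarrow> 'a \<Rightarrow> 'a) \<Rightarrow> bool" where
  "Malg sc mul \<longleftrightarrow>
     (\<forall>r a b. sc r (a + b) = sc r a + sc r b) \<and>
     (\<forall>r s a. sc (r + s) a = sc r a + sc s a) \<and>
     (\<forall>r s a. sc (r * s) a = sc r (sc s a)) \<and>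
     (\<forall>a. sc 1 a = a) \<and>
     (\<forall>m a b c. mul m (a + b) c = mul m a c + mul m b c) \<and>
     (\<forall>m a b c. mul m a (b + c) = mul m a b + mul m a c) \<and>
     (\<forall>m r a b. mul m (sc r a) b = sc r (mul m a b)) \<and>
     (\<forall>m r a b. mul m a (sc r b) = sc r (mul m a b))"

definition Mhom :: "('r::comm_ring_1 \<Rightarrow> 'a::ab_group_add \<Rightarrow> 'a) \<Rightarrow> ('m \<Rightarrow> 'a \<Rightarrow> 'a \<Rightarrow> 'a)
    \<Rightarrow> ('r \<Rightarrow> 'b::ab_group_add \<Rightarrow> 'b) \<Rightarrow> ('m \<Rightarrow> 'b \<Rightarrow> 'b \<Rightarrow> 'b) \<Rightarrow> ('a \<Rightarrow> 'b) \<Rightarrow> bool" where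
  "Mhom sc1 mul1 sc2 mul2 f \<longleftrightarrow>
     (\<forall>a b. f (a + b) = f a + f b) \<and>
     (\<forall>r a. f (sc1 r a) = sc2 r (f a)) \<and>
     (\<forall>m a b. f (mul1 m a b) = mul2 m (f a) (f b))"

definition Maut :: "('r::comm_ring_1 \<Rightarrow> 'a::ab_group_add \<Rightarrow> 'a) \<Rightarrow> ('m \<Rightarrow> 'a \<Rightarrow> 'a \<Rightarrow> 'a) \<Rightarrow> ('a \<Rightarrow> 'a) set" where
  "Maut sc mul = {f. Mhom sc mul sc mul f \<and> bij f}"

definition MautF :: "('r::comm_ring_1 \<Rightarrow> 'a::ab_group_add \<Rightarrow> 'a) \<Rightarrow> ('m \<Rightarrow> 'a \<Rightarrow> 'a \<Rightarrow> 'a) \<Rightarrow> 'a set \<Rightarrow> ('a \<Rightarrow> 'a) set" where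
  "MautF sc mul F = {f \<in> Maut sc mul. f ` F = F}"

definition Rspan :: "('r::comm_ring_1 \<Rightarrow> 'a::ab_group_add \<Rightarrow> 'a) \<Rightarrow> ('x \<Rightarrow> 'a) \<Rightarrow> 'a set" where
  "Rspan sc e = {(\<Sum>x\<in>S. sc (c x) (e x)) | S c. finite S}"

(* the family e is R-linearly independent, i.e. its span is a copy of the free module on 'x *)
definition Rindep :: "('r::comm_ring_1 \<Rightarrow> 'a::ab_group_add \<Rightarrow> 'a) \<Rightarrow> ('x \<Rightarrow> 'a) \<Rightarrow> bool" where
  "Rindep sc e \<longleftrightarrow> (\<forall>S c. finite S \<longrightarrow> (\<Sum>x\<in>S. sc (c x) (e x)) = 0 \<longrightarrow> (\<forall>x\<in>S. c x = 0))"

definition Mclosed :: "('r::comm_ring_1 \<Rightarrow> 'a::ab_group_add \<Rightarrow> 'a) \<Rightarrow> ('m \<Rightarrow> 'a \<Rightarrow> 'a \<Rightarrow> 'a) \<Rightarrow> 'a set \<Rightarrow> bool" where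
  "Mclosed sc mul B \<longleftrightarrow> 0 \<in> B \<and> (\<forall>a\<in>B. \<forall>b\<in>B. a + b \<in> B) \<and> (\<forall>r. \<forall>a\<in>B. sc r a \<in> B)
      \<and> (\<forall>m. \<forall>a\<in>B. \<forall>b\<in>B. mul m a b \<in> B)"

definition Mgenerated :: "('r::comm_ring_1 \<Rightarrow> 'a::ab_group_add \<Rightarrow> 'a) \<Rightarrow> ('m \<Rightarrow> 'a \<Rightarrow> 'a \<Rightarrow> 'a) \<Rightarrow> 'a set \<Rightarrow> 'a set" where
  "Mgenerated sc mul S = \<Inter>{B. S \<subseteq> B \<and> Mclosed sc mul B}"

definition freeF :: "('x, 'm, 'r::comm_ring_1) freealg set" where
  "freeF = Rspan fsmult fgen"

(* the identification of F inside A(X) with the copy of F inside A (x |-> e x) *)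
definition Fiso :: "('r::comm_ring_1 \<Rightarrow> 'a::ab_group_add \<Rightarrow> 'a) \<Rightarrow> ('x \<Rightarrow> 'a) \<Rightarrow> ('x, 'm, 'r) freealg \<Rightarrow> 'a" where
  "Fiso sc e f = (\<Sum>s\<in>Poly_Mapping.keys f. (case s of Gen x \<Rightarrow> sc (Poly_Mapping.lookup f s) (e x) | Op _ _ _ \<Rightarrow> 0))"

definition tilde :: "('r::comm_ring_1 \<Rightarrow> 'a::ab_group_add \<Rightarrow> 'a) \<Rightarrow> ('x \<Rightarrow> 'a) \<Rightarrow> ('a \<Rightarrow> 'a)
    \<Rightarrow> (('x, 'm, 'r) freealg \<Rightarrow> ('x, 'm, 'r) freealg)" where
  "tilde sc e \<theta> = (THE \<phi>. Mhom fsmult fmult fsmult fmult \<phi> \<and>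
       (\<forall>x. \<phi> (fgen x) \<in> freeF \<and> Fiso sc e (\<phi> (fgen x)) = \<theta> (e x)))"

end

theory Submission
  imports Defs
begin


lemma lookup_fsmult: "Poly_Mapping.lookup (fsmult r f) s = r * Poly_Mapping.lookup f s"
  by (simp add: fsmult_def map.rep_eq when_def)

lemma fsmult_single: "fsmult r (Poly_Mapping.single w c) = Poly_Mapping.single w (r*c)"
  by (simp add: fsmult_def)

lemma keys_fsmult: "Poly_Mapping.keys (fsmult r f) \<subseteq> Poly_Mapping.keys f"
  by (auto simp: in_keys_iff lookup_fsmult)

lemma pm_expand_sup:
  assumes "finite S" "Poly_Mapping.keys f \<subseteq> S"
  shows "f = (\<Sum>s\<in>S. Poly_Mapping.single s (Poly_Mapping.lookup f s))"
proof (rule poly_mapping_eqI)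
  fix k
  show "Poly_Mapping.lookup f k = Poly_Mapping.lookup (\<Sum>s\<in>S. Poly_Mapping.single s (Poly_Mapping.lookup f s)) k"
    using assms by (auto simp: lookup_sum lookup_single when_def in_keys_iff)
qed

lemma fmult_sup:
  assumes "finite S" "Poly_Mapping.keys f \<subseteq> S" "finite T" "Poly_Mapping.keys g \<subseteq> T"
  shows "fmult m f g = (\<Sum>s\<in>S. \<Sum>t\<in>T. Poly_Mapping.single (Op s m t) (Poly_Mapping.lookup f s * Poly_Mapping.lookup g t))"
proof -
  have "fmult m f g = (\<Sum>s\<in>S. \<Sum>t\<in>Poly_Mapping.keys g. Poly_Mapping.single (Op s m t) (Poly_Mapping.lookup f s * Poly_Mapping.lookup g t))"
    unfolding fmult_def using assms
    by (intro sum.mono_neutral_left) (auto simp: in_keys_iff)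
  also have "\<dots> = (\<Sum>s\<in>S. \<Sum>t\<in>T. Poly_Mapping.single (Op s m t) (Poly_Mapping.lookup f s * Poly_Mapping.lookup g t))"
    using assms by (intro sum.cong refl sum.mono_neutral_left) (auto simp: in_keys_iff)
  finally show ?thesis .
qed

lemma fsmult_add: "fsmult r (a + b) = fsmult r a + fsmult r b"
  by (rule poly_mapping_eqI) (simp add: lookup_fsmult lookup_add distrib_left)

lemma fsmult_zero[simp]: "fsmult r 0 = 0"
  by (rule poly_mapping_eqI) (simp add: lookup_fsmult)

lemma fsmult_sum: "fsmult r (\<Sum>i\<in>I. g i) = (\<Sum>i\<in>I. fsmult r (g i))"
  by (induction I rule: infinite_finite_induct) (auto simp: fsmult_add)

lemma Malg_free: "Malg (fsmult :: 'r::comm_ring_1 \<Rightarrow> _) (fmult :: 'm \<Rightarrow> ('x,'m,'r) freealg \<Rightarrow> _)"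
  unfolding Malg_def
proof (intro conjI allI)
  fix r s :: 'r and a b c :: "('x,'m,'r) freealg" and m :: 'm
  show "fsmult r (a + b) = fsmult r a + fsmult r b" by (rule fsmult_add)
  show "fsmult (r + s) a = fsmult r a + fsmult s a"
    by (rule poly_mapping_eqI) (simp add: lookup_fsmult lookup_add distrib_right)
  show "fsmult (r * s) a = fsmult r (fsmult s a)"
    by (rule poly_mapping_eqI) (simp add: lookup_fsmult)
  show "fsmult 1 a = a"
    by (rule poly_mapping_eqI) (simp add: lookup_fsmult)
  let ?S = "Poly_Mapping.keys a \<union> Poly_Mapping.keys b \<union> Poly_Mapping.keys (a+b)"
  let ?T = "Poly_Mapping.keys b \<union> Poly_Mapping.keys c \<union> Poly_Mapping.keys (b+c)"
  show "fmult m (a + b) c = fmult m a c + fmult m b c"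
    by (subst (1 2 3) fmult_sup[where S = ?S and T = "Poly_Mapping.keys c"])
       (auto simp: lookup_add distrib_right single_add sum.distrib)
  show "fmult m a (b + c) = fmult m a b + fmult m a c"
    by (subst (1 2 3) fmult_sup[where T = ?T and S = "Poly_Mapping.keys a"])
       (auto simp: lookup_add distrib_left single_add sum.distrib)
  show "fmult m (fsmult r a) b = fsmult r (fmult m a b)"
    by (subst (1 2) fmult_sup[where S = "Poly_Mapping.keys a" and T = "Poly_Mapping.keys b"])
       (auto simp: keys_fsmult lookup_fsmult fsmult_sum fsmult_single mult.assoc)
  show "fmult m a (fsmult r b) = fsmult r (fmult m a b)"
    by (subst (1 2) fmult_sup[where S = "Poly_Mapping.keys a" and T = "Poly_Mapping.keys b"])
       (auto simp: keys_fsmult lookup_fsmult fsmult_sum fsmult_single mult.left_commute)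
qed



lemma add_zero_hom:
  fixes f :: "'a::ab_group_add \<Rightarrow> 'b::ab_group_add"
  assumes "\<And>a b. f (a + b) = f a + f b" shows "f 0 = (0::'b::ab_group_add)"
proof -
  have 1: "f 0 = f 0 + f 0" using assms[of 0 0] by (simp only: add_0_left)
  have "f 0 + f 0 = f 0 + 0" by (rule trans[OF 1[symmetric] add_0_right[symmetric]])
  then show ?thesis by (rule add_left_imp_eq)
qed

context
  fixes sc :: "'r::comm_ring_1 \<Rightarrow> 'a::ab_group_add \<Rightarrow> 'a" and mul :: "'m \<Rightarrow> 'a \<Rightarrow> 'a \<Rightarrow> 'a"
  assumes alg: "Malg sc mul"
begin

lemma sc_add: "sc r (a + b) = sc r a + sc r b"
  using alg unfolding Malg_def by simp
lemma sc_add2: "sc (r + s) a = sc r a + sc s a"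
  using alg unfolding Malg_def by simp
lemma sc_mult: "sc (r * s) a = sc r (sc s a)"
  using alg unfolding Malg_def by simp
lemma sc_one: "sc 1 a = a"
  using alg unfolding Malg_def by simp
lemma mul_add1: "mul m (a + b) c = mul m a c + mul m b c"
  using alg unfolding Malg_def by simp
lemma mul_add2: "mul m a (b + c) = mul m a b + mul m a c"
  using alg unfolding Malg_def by simp
lemma mul_sc1: "mul m (sc r a) b = sc r (mul m a b)"
  using alg unfolding Malg_def by simp
lemma mul_sc2: "mul m a (sc r b) = sc r (mul m a b)"
  using alg unfolding Malg_def by simp
lemma sc_zero[simp]: "sc r 0 = 0"
  using add_zero_hom[of "sc r"] sc_add by blast
lemma sc_zero2[simp]: "sc 0 a = 0"
  using add_zero_hom[of "\<lambda>r. sc r a"] sc_add2 by blast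
lemma mul_zero1[simp]: "mul m 0 b = 0"
  using add_zero_hom[of "\<lambda>a. mul m a b"] mul_add1 by blast
lemma mul_zero2[simp]: "mul m a 0 = 0"
  using add_zero_hom[of "\<lambda>b. mul m a b"] mul_add2 by blast

lemma sc_sum: "sc r (\<Sum>i\<in>I. g i) = (\<Sum>i\<in>I. sc r (g i))"
  by (induction I rule: infinite_finite_induct) (auto simp: sc_add)
lemma mul_sum1: "mul m (\<Sum>i\<in>I. g i) b = (\<Sum>i\<in>I. mul m (g i) b)"
  by (induction I rule: infinite_finite_induct) (auto simp: mul_add1)
lemma mul_sum2: "mul m b (\<Sum>i\<in>I. g i) = (\<Sum>i\<in>I. mul m b (g i))"
  by (induction I rule: infinite_finite_induct) (auto simp: mul_add2)

definition LinExt :: "(('x,'m) magma \<Rightarrow> 'a) \<Rightarrow> ('x,'m,'r) freealg \<Rightarrow> 'a" where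
  "LinExt v f = (\<Sum>s\<in>Poly_Mapping.keys f. sc (Poly_Mapping.lookup f s) (v s))"

lemma LinExt_sup: "finite S \<Longrightarrow> Poly_Mapping.keys f \<subseteq> S \<Longrightarrow>
   LinExt v f = (\<Sum>s\<in>S. sc (Poly_Mapping.lookup f s) (v s))"
  unfolding LinExt_def by (intro sum.mono_neutral_left) (auto simp: in_keys_iff)

lemma LinExt_add: "LinExt v (f + g) = LinExt v f + LinExt v g"
proof -
  let ?S = "Poly_Mapping.keys f \<union> Poly_Mapping.keys g \<union> Poly_Mapping.keys (f+g)"
  show ?thesis
    by (subst (1 2 3) LinExt_sup[where S = ?S]) (auto simp: lookup_add sc_add2 sum.distrib)
qed

lemma LinExt_sc: "LinExt v (fsmult r f) = sc r (LinExt v f)"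
  by (subst (1 2) LinExt_sup[where S = "Poly_Mapping.keys f"])
     (auto simp: keys_fsmult lookup_fsmult sc_mult sc_sum)

lemma LinExt_single: "LinExt v (Poly_Mapping.single w c) = sc c (v w)"
  by (subst LinExt_sup[where S = "{w}"]) auto

lemma LinExt_zero: "LinExt v 0 = 0"
  by (simp add: LinExt_def)

lemma LinExt_sum: "LinExt v (\<Sum>i\<in>I. g i) = (\<Sum>i\<in>I. LinExt v (g i))"
  by (induction I rule: infinite_finite_induct) (simp_all add: LinExt_add LinExt_zero)

primrec ev :: "('x \<Rightarrow> 'a) \<Rightarrow> ('x,'m) magma \<Rightarrow> 'a" where
  "ev g (Gen x) = g x"
| "ev g (Op s m t) = mul m (ev g s) (ev g t)"

lemma ext_Mhom: "Mhom fsmult fmult sc mul (LinExt (ev (g :: 'x \<Rightarrow> 'a)) :: ('x,'m,'r) freealg \<Rightarrow> 'a)"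
  unfolding Mhom_def
proof (intro conjI allI)
  fix a b :: "('x,'m,'r) freealg" and r m
  show "LinExt (ev g) (a + b) = LinExt (ev g) a + LinExt (ev g) b" by (rule LinExt_add)
  show "LinExt (ev g) (fsmult r a) = sc r (LinExt (ev g) a)" by (rule LinExt_sc)
  show "LinExt (ev g) (fmult m a b) = mul m (LinExt (ev g) a) (LinExt (ev g) b)"
  proof -
    have "LinExt (ev g) (fmult m a b) = (\<Sum>s\<in>Poly_Mapping.keys a. \<Sum>t\<in>Poly_Mapping.keys b.
       sc (Poly_Mapping.lookup a s * Poly_Mapping.lookup b t) (mul m (ev g s) (ev g t)))"
      unfolding fmult_def LinExt_sum LinExt_single by simp
    also have "\<dots> = (\<Sum>s\<in>Poly_Mapping.keys a. \<Sum>t\<in>Poly_Mapping.keys b.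
       mul m (sc (Poly_Mapping.lookup a s) (ev g s)) (sc (Poly_Mapping.lookup b t) (ev g t)))"
      by (intro sum.cong refl) (simp add: mul_sc1 mul_sc2 sc_mult[symmetric] mult.commute)
    also have "\<dots> = mul m (LinExt (ev g) a) (LinExt (ev g) b)"
      unfolding LinExt_def mul_sum1 by (simp only: mul_sum2)
    finally show ?thesis .
  qed
qed

lemma ext_gen: "LinExt (ev g) (fgen x) = g x"
  by (simp add: fgen_def LinExt_single sc_one)

lemma ext_exists: "\<exists>\<phi> :: ('x,'m,'r) freealg \<Rightarrow> 'a. Mhom fsmult fmult sc mul \<phi> \<and> (\<forall>x. \<phi> (fgen x) = g x)"
  by (rule exI[of _ "LinExt (ev g)"]) (simp add: ext_Mhom ext_gen)

end



lemma Mhom_add: "Mhom sc1 mul1 sc2 mul2 f \<Longrightarrow> f (a + b) = f a + f b"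
  and Mhom_sc: "Mhom sc1 mul1 sc2 mul2 f \<Longrightarrow> f (sc1 r a) = sc2 r (f a)"
  and Mhom_mul: "Mhom sc1 mul1 sc2 mul2 f \<Longrightarrow> f (mul1 m a b) = mul2 m (f a) (f b)"
  by (simp_all add: Mhom_def)

lemma Mhom_zero: "Mhom sc1 mul1 sc2 mul2 f \<Longrightarrow> f 0 = 0"
  using add_zero_hom[of f] Mhom_add by blast

lemma Mhom_diff: "Mhom sc1 mul1 sc2 mul2 f \<Longrightarrow> f (a - b) = f a - f b"
  by (metis Mhom_add diff_add_cancel eq_diff_eq)

lemma Mhom_sum: "Mhom sc1 mul1 sc2 mul2 f \<Longrightarrow> f (\<Sum>i\<in>I. g i) = (\<Sum>i\<in>I. f (g i))"
  by (induction I rule: infinite_finite_induct) (auto simp: Mhom_add Mhom_zero)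

lemma Mhom_span: "Mhom sc1 mul1 sc2 mul2 f \<Longrightarrow>
   f (\<Sum>i\<in>I. sc1 (c i) (g i)) = (\<Sum>i\<in>I. sc2 (c i) (f (g i)))"
  by (simp add: Mhom_sum Mhom_sc)

lemma Mhom_comp: "Mhom sc1 mul1 sc2 mul2 f \<Longrightarrow> Mhom sc2 mul2 sc3 mul3 g \<Longrightarrow> Mhom sc1 mul1 sc3 mul3 (g \<circ> f)"
  by (simp add: Mhom_def)

lemma Mhom_id: "Mhom sc mul sc mul id"
  by (simp add: Mhom_def)

lemma Mhom_inv:
  assumes h: "Mhom sc mul sc mul f" and b: "bij f"
  shows "Mhom sc mul sc mul (inv f)"
proof -
  have i: "inv f (f a) = a" for a using b by (simp add: bij_is_inj)
  have s: "f (inv f a) = a" for a using b by (simp add: bij_is_surj surj_f_inv_f)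
  show ?thesis unfolding Mhom_def
  proof (intro conjI allI)
    fix a b r m
    show "inv f (a + b) = inv f a + inv f b"
      using i[of "inv f a + inv f b"] by (simp add: Mhom_add[OF h] s)
    show "inv f (sc r a) = sc r (inv f a)"
      using i[of "sc r (inv f a)"] by (simp add: Mhom_sc[OF h] s)
    show "inv f (mul m a b) = mul m (inv f a) (inv f b)"
      using i[of "mul m (inv f a) (inv f b)"] by (simp add: Mhom_mul[OF h] s)
  qed
qed

lemma Mclosed_sum: "Mclosed sc mul B \<Longrightarrow> (\<And>i. i \<in> I \<Longrightarrow> g i \<in> B) \<Longrightarrow> (\<Sum>i\<in>I. g i) \<in> B"
  unfolding Mclosed_def
  by (induction I rule: infinite_finite_induct) auto

lemma Mclosed_Rspan:
  fixes sc :: "'r::comm_ring_1 \<Rightarrow> 'a::ab_group_add \<Rightarrow> 'a" and e :: "'x \<Rightarrow> 'a"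
  shows "Mclosed sc mul B \<Longrightarrow> range e \<subseteq> B \<Longrightarrow> Rspan sc e \<subseteq> B"
  unfolding Rspan_def
proof clarify
  fix S :: "'x set" and c :: "'x \<Rightarrow> 'r"
  assume B: "Mclosed sc mul B" and "range e \<subseteq> B" and "finite S"
  have "sc (c x) (e x) \<in> B" for x
  proof -
    have "e x \<in> B" using \<open>range e \<subseteq> B\<close> by (rule range_subsetD)
    moreover have "\<forall>r. \<forall>a\<in>B. sc r a \<in> B" using B unfolding Mclosed_def by (elim conjE)
    ultimately show ?thesis by simp
  qed
  then show "(\<Sum>x\<in>S. sc (c x) (e x)) \<in> B" by (rule Mclosed_sum[OF B])
qed

lemma gen_range:
  assumes "Mgenerated sc mul (Rspan sc e) = UNIV"
  shows "Mgenerated sc mul (range e) = UNIV"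
proof -
  have "{B. range e \<subseteq> B \<and> Mclosed sc mul B} \<subseteq> {B. Rspan sc e \<subseteq> B \<and> Mclosed sc mul B}"
    using Mclosed_Rspan by blast
  then have "Mgenerated sc mul (Rspan sc e) \<subseteq> Mgenerated sc mul (range e)"
    unfolding Mgenerated_def by blast
  then show ?thesis using assms by blast
qed

lemma Mgen_eq:
  assumes g: "Mgenerated sc1 mul1 S = UNIV" and f: "Mhom sc1 mul1 sc2 mul2 f"
    and h: "Mhom sc1 mul1 sc2 mul2 h" and eq: "\<And>s. s \<in> S \<Longrightarrow> f s = h s"
  shows "f = h"
proof -
  have "Mclosed sc1 mul1 {a. f a = h a}"
    unfolding Mclosed_def using f h
    by (simp add: Mhom_zero Mhom_add Mhom_sc Mhom_mul)
  moreover have "S \<subseteq> {a. f a = h a}" using eq by blast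
  ultimately have "Mgenerated sc1 mul1 S \<subseteq> {a. f a = h a}"
    unfolding Mgenerated_def by blast
  then show ?thesis using g by auto
qed

lemma Mgen_surj:
  assumes g: "Mgenerated sc2 mul2 S = UNIV" and f: "Mhom sc1 mul1 sc2 mul2 f"
    and S: "S \<subseteq> range f"
  shows "surj f"
proof -
  have "Mclosed sc2 mul2 (range f)"
    unfolding Mclosed_def using f
    by (auto simp: Mhom_zero[OF f, symmetric] Mhom_add[OF f, symmetric] Mhom_sc[OF f, symmetric]
        Mhom_mul[OF f, symmetric])
  then have "Mgenerated sc2 mul2 S \<subseteq> range f"
    unfolding Mgenerated_def using S by blast
  then show ?thesis using g by auto
qed

lemma single_Op: "Poly_Mapping.single (Op s m t) (1::'r::comm_ring_1) =
    fmult m (Poly_Mapping.single s 1) (Poly_Mapping.single t 1)"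
  by (subst fmult_sup[where S = "{s}" and T = "{t}"]) auto

lemma free_gen: "Mgenerated fsmult fmult (range fgen) = (UNIV :: ('x,'m,'r::comm_ring_1) freealg set)"
proof -
  have "f \<in> B" if B: "Mclosed fsmult fmult B" and R: "range fgen \<subseteq> B" for B and f :: "('x,'m,'r) freealg"
  proof -
    have w: "Poly_Mapping.single w 1 \<in> B" for w
    proof (induction w)
      case (Gen x) then show ?case using R by (auto simp: fgen_def)
    next
      case (Op s m t) then show ?case using B by (simp add: single_Op Mclosed_def)
    qed
    have "f = (\<Sum>s\<in>Poly_Mapping.keys f. fsmult (Poly_Mapping.lookup f s) (Poly_Mapping.single s 1))"
      using pm_expand_sup[of "Poly_Mapping.keys f" f] by (simp add: fsmult_single)
    also have "\<dots> \<in> B"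
      using B w by (intro Mclosed_sum) (auto simp: Mclosed_def)
    finally show ?thesis .
  qed
  then show ?thesis unfolding Mgenerated_def by blast
qed



lemma fsmult_fgen: "fsmult c (fgen x) = Poly_Mapping.single (Gen x) c"
  by (simp add: fgen_def fsmult_single)

lemma freeF_char: "(freeF :: ('x,'m,'r::comm_ring_1) freealg set) = {f. Poly_Mapping.keys f \<subseteq> range Gen}"
proof (intro set_eqI iffI)
  fix f :: "('x,'m,'r) freealg"
  assume "f \<in> freeF"
  then obtain S c where f: "f = (\<Sum>x\<in>S. fsmult (c x) (fgen x))"
    unfolding freeF_def Rspan_def by blast
  have "Poly_Mapping.keys f \<subseteq> (\<Union>x\<in>S. Poly_Mapping.keys (fsmult (c x) (fgen x)))"
    unfolding f by (rule keys_sum)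
  also have "\<dots> \<subseteq> range Gen" by (auto simp: fsmult_fgen)
  finally show "f \<in> {f. Poly_Mapping.keys f \<subseteq> range Gen}" by simp
next
  fix f :: "('x,'m,'r) freealg"
  assume "f \<in> {f. Poly_Mapping.keys f \<subseteq> range Gen}"
  then have k: "Poly_Mapping.keys f \<subseteq> range Gen" by simp
  define S where "S = Gen -` Poly_Mapping.keys f"
  have fin: "finite S" unfolding S_def by (rule finite_vimageI) (auto simp: inj_def)
  have ks: "Poly_Mapping.keys f = Gen ` S" using k unfolding S_def by auto
  have "f = (\<Sum>s\<in>Gen ` S. Poly_Mapping.single s (Poly_Mapping.lookup f s))"
    using pm_expand_sup[of "Poly_Mapping.keys f" f] ks fin by simp
  also have "\<dots> = (\<Sum>x\<in>S. fsmult (Poly_Mapping.lookup f (Gen x)) (fgen x))"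
    by (subst sum.reindex) (auto simp: inj_on_def fsmult_fgen)
  finally have fe: "f = (\<Sum>x\<in>S. fsmult (Poly_Mapping.lookup f (Gen x)) (fgen x))" .
  show "f \<in> freeF" unfolding freeF_def Rspan_def
    by (rule CollectI, rule exI[of _ S], rule exI[of _ "\<lambda>x. Poly_Mapping.lookup f (Gen x)"])
       (use fe fin in simp)
qed

lemma freeF_fgen: "fgen x \<in> freeF"
  by (simp add: freeF_char fgen_def)

lemma freeF_add: "f \<in> freeF \<Longrightarrow> g \<in> freeF \<Longrightarrow> f + g \<in> freeF"
  using keys_add[of f g] by (auto simp: freeF_char)

lemma freeF_diff: "f \<in> freeF \<Longrightarrow> g \<in> freeF \<Longrightarrow> f - g \<in> freeF"
  using keys_diff[of f g] by (auto simp: freeF_char)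

lemma freeF_sc: "f \<in> freeF \<Longrightarrow> fsmult r f \<in> freeF"
  using keys_fsmult[of r f] by (auto simp: freeF_char)

lemma freeF_zero: "0 \<in> freeF"
  by (simp add: freeF_char)

lemma freeF_sum: "(\<And>i. i \<in> I \<Longrightarrow> g i \<in> freeF) \<Longrightarrow> (\<Sum>i\<in>I. g i) \<in> freeF"
  by (induction I rule: infinite_finite_induct) (simp_all add: freeF_add freeF_zero)

lemma Mhom_freeF:
  assumes h: "Mhom fsmult fmult fsmult fmult \<phi>" and g: "\<And>x. \<phi> (fgen x) \<in> freeF"
  shows "\<phi> ` freeF \<subseteq> freeF"
proof
  fix y assume "y \<in> \<phi> ` freeF"
  then obtain S c where y: "y = \<phi> (\<Sum>x\<in>S. fsmult (c x) (fgen x))"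
    unfolding freeF_def Rspan_def by blast
  show "y \<in> freeF" unfolding y Mhom_span[OF h] using g by (intro freeF_sum freeF_sc)
qed

context
  fixes sc :: "'r::comm_ring_1 \<Rightarrow> 'a::ab_group_add \<Rightarrow> 'a" and mul :: "'m \<Rightarrow> 'a \<Rightarrow> 'a \<Rightarrow> 'a"
    and e :: "'x \<Rightarrow> 'a"
  assumes alg: "Malg sc mul"
begin

lemma Fiso_L: "(Fiso sc e :: ('x,'m,'r) freealg \<Rightarrow> 'a) = LinExt sc (case_magma e (\<lambda>_ _ _. 0))"
proof (rule ext)
  fix f :: "('x,'m,'r) freealg"
  show "Fiso sc e f = LinExt sc (case_magma e (\<lambda>_ _ _. 0)) f"
    unfolding Fiso_def LinExt_def[OF alg]
    by (intro sum.cong refl) (auto split: magma.split simp: sc_zero[OF alg])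
qed

lemma Fiso_add: "Fiso sc e (f + g :: ('x,'m,'r) freealg) = Fiso sc e f + Fiso sc e g"
  by (simp add: Fiso_L LinExt_add[OF alg])

lemma Fiso_diff: "Fiso sc e (f - g :: ('x,'m,'r) freealg) = Fiso sc e f - Fiso sc e g"
  by (metis Fiso_add diff_add_cancel eq_diff_eq)

lemma Fiso_sc: "Fiso sc e (fsmult r f :: ('x,'m,'r) freealg) = sc r (Fiso sc e f)"
  by (simp add: Fiso_L LinExt_sc[OF alg])

lemma Fiso_sum: "Fiso sc e (\<Sum>i\<in>I. g i :: ('x,'m,'r) freealg) = (\<Sum>i\<in>I. Fiso sc e (g i))"
  by (simp add: Fiso_L LinExt_sum[OF alg])

lemma Fiso_fgen: "Fiso sc e (fgen x :: ('x,'m,'r) freealg) = e x"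
  by (simp add: Fiso_L LinExt_single[OF alg] fgen_def sc_one[OF alg])

lemma Fiso_span: "Fiso sc e (\<Sum>x\<in>S. fsmult (c x) (fgen x) :: ('x,'m,'r) freealg) = (\<Sum>x\<in>S. sc (c x) (e x))"
  by (simp add: Fiso_sum Fiso_sc Fiso_fgen)

lemma Fiso_eta:
  assumes h: "Mhom fsmult fmult sc mul \<eta>" and g: "\<And>x. \<eta> (fgen x) = e x" and f: "f \<in> freeF"
  shows "\<eta> f = Fiso sc e f"
proof -
  obtain S c where "f = (\<Sum>x\<in>S. fsmult (c x) (fgen x))"
    using f unfolding freeF_def Rspan_def by blast
  then show ?thesis by (simp add: Fiso_span Mhom_span[OF h] g)
qed

lemma eta_image:
  assumes h: "Mhom fsmult fmult sc mul \<eta>" and g: "\<And>x. \<eta> (fgen x) = e x"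
  shows "\<eta> ` freeF = Rspan sc e"
proof (intro set_eqI iffI)
  fix y assume "y \<in> \<eta> ` freeF"
  then obtain S c where "finite S" "y = \<eta> (\<Sum>x\<in>S. fsmult (c x) (fgen x))"
    unfolding freeF_def Rspan_def by blast
  then show "y \<in> Rspan sc e" unfolding Rspan_def by (auto simp: Mhom_span[OF h] g)
next
  fix y assume "y \<in> Rspan sc e"
  then obtain S c where "finite S" "y = (\<Sum>x\<in>S. sc (c x) (e x))"
    unfolding Rspan_def by blast
  then have "y = \<eta> (\<Sum>x\<in>S. fsmult (c x) (fgen x))" "(\<Sum>x\<in>S. fsmult (c x) (fgen x)) \<in> freeF"
    unfolding freeF_def Rspan_def by (auto simp: Mhom_span[OF h] g)
  then show "y \<in> \<eta> ` freeF" by blast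
qed

lemma Fiso_image: "Fiso sc e ` (freeF :: ('x,'m,'r) freealg set) = Rspan sc e"
proof (intro set_eqI iffI)
  fix y assume "y \<in> Fiso sc e ` (freeF :: ('x,'m,'r) freealg set)"
  then obtain S c where "finite S" "y = Fiso sc e (\<Sum>x\<in>S. fsmult (c x) (fgen x :: ('x,'m,'r) freealg))"
    unfolding freeF_def Rspan_def by blast
  then show "y \<in> Rspan sc e" unfolding Rspan_def Fiso_span by auto
next
  fix y assume "y \<in> Rspan sc e"
  then obtain S c where "finite S" "y = (\<Sum>x\<in>S. sc (c x) (e x))"
    unfolding Rspan_def by blast
  then have "y = Fiso sc e (\<Sum>x\<in>S. fsmult (c x) (fgen x :: ('x,'m,'r) freealg))" "(\<Sum>x\<in>S. fsmult (c x) (fgen x :: ('x,'m,'r) freealg)) \<in> freeF"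
    unfolding freeF_def Rspan_def by (auto simp: Fiso_span)
  then show "y \<in> Fiso sc e ` (freeF :: ('x,'m,'r) freealg set)" by blast
qed

lemma Fiso_zero:
  assumes ind: "Rindep sc e" and f: "(f :: ('x,'m,'r) freealg) \<in> freeF" and z: "Fiso sc e f = 0"
  shows "f = 0"
proof -
  have k: "Poly_Mapping.keys f \<subseteq> range Gen" using f by (simp add: freeF_char)
  define S where "S = Gen -` Poly_Mapping.keys f"
  have fin: "finite S" unfolding S_def by (rule finite_vimageI) (auto simp: inj_def)
  have ks: "Poly_Mapping.keys f = Gen ` S" using k unfolding S_def by auto
  have "Fiso sc e f = (\<Sum>s\<in>Gen ` S. sc (Poly_Mapping.lookup f s) (case_magma e (\<lambda>_ _ _. 0) s))"
    unfolding Fiso_L using LinExt_sup[OF alg, of "Gen ` S" f] ks fin by simp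
  also have "\<dots> = (\<Sum>x\<in>S. sc (Poly_Mapping.lookup f (Gen x)) (e x))"
    by (subst sum.reindex) (auto simp: inj_on_def)
  finally have sf: "(\<Sum>x\<in>S. sc (Poly_Mapping.lookup f (Gen x)) (e x)) = 0" using z by simp
  have "\<forall>x\<in>S. Poly_Mapping.lookup f (Gen x) = 0"
  proof
    fix x assume "x \<in> S"
    then show "Poly_Mapping.lookup f (Gen x) = 0"
      by (rule ind[unfolded Rindep_def, rule_format, OF fin sf])
  qed
  then have "Poly_Mapping.keys f = {}" using ks by (auto simp: in_keys_iff)
  then show ?thesis by simp
qed

lemma Fiso_inj:
  assumes ind: "Rindep sc e"
  shows "inj_on (Fiso sc e) (freeF :: ('x,'m,'r) freealg set)"
proof (rule inj_onI)
  fix f g :: "('x,'m,'r) freealg" assume "f \<in> freeF" "g \<in> freeF" "Fiso sc e f = Fiso sc e g"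
  then have "f - g = 0" using Fiso_zero[OF ind, of "f - g"] by (simp add: freeF_diff Fiso_diff)
  then show "f = g" by simp
qed

end



lemma e_Rspan: "e x \<in> Rspan sc e" if "Malg sc mul"
  unfolding Rspan_def
  by (rule CollectI, rule exI[of _ "{x}"], rule exI[of _ "\<lambda>_. 1"]) (simp add: sc_one[OF that])

context
  fixes sc :: "'r::comm_ring_1 \<Rightarrow> 'a::ab_group_add \<Rightarrow> 'a" and mul :: "'m \<Rightarrow> 'a \<Rightarrow> 'a \<Rightarrow> 'a"
    and e :: "'x \<Rightarrow> 'a"
  assumes alg: "Malg sc mul" and indep: "Rindep sc e"
    and gen: "Mgenerated sc mul (Rspan sc e) = UNIV"
begin

abbreviation T :: "('a \<Rightarrow> 'a) \<Rightarrow> ('x,'m,'r) freealg \<Rightarrow> ('x,'m,'r) freealg" where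
  "T \<theta> \<equiv> tilde sc e \<theta>"

abbreviation Pt :: "('a \<Rightarrow> 'a) \<Rightarrow> (('x,'m,'r) freealg \<Rightarrow> ('x,'m,'r) freealg) \<Rightarrow> bool" where
  "Pt \<theta> \<phi> \<equiv> Mhom fsmult fmult fsmult fmult \<phi> \<and> (\<forall>x. \<phi> (fgen x) \<in> freeF \<and> Fiso sc e (\<phi> (fgen x)) = \<theta> (e x))"

lemma Pt_unique:
  assumes a: "Pt \<theta> \<phi>1" and b: "Pt \<theta> \<phi>2" shows "\<phi>1 = \<phi>2"
proof (rule Mgen_eq[OF free_gen])
  show "Mhom fsmult fmult fsmult fmult \<phi>1" using a by blast
  show "Mhom fsmult fmult fsmult fmult \<phi>2" using b by blast
  fix s assume "s \<in> range (fgen :: 'x \<Rightarrow> ('x,'m,'r) freealg)"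
  then obtain x where s: "s = fgen x" by blast
  have "\<phi>1 (fgen x) = \<phi>2 (fgen x)"
    using a b by (intro inj_onD[OF Fiso_inj[OF alg indep]]) auto
  then show "\<phi>1 s = \<phi>2 s" by (simp add: s)
qed

lemma Pt_exists:
  assumes "\<And>x. \<theta> (e x) \<in> Rspan sc e"
  shows "\<exists>\<phi>. Pt \<theta> \<phi>"
proof -
  have "\<forall>x. \<exists>f::('x,'m,'r) freealg. f \<in> freeF \<and> Fiso sc e f = \<theta> (e x)"
  proof
    fix x
    have "\<theta> (e x) \<in> Fiso sc e ` (freeF :: ('x,'m,'r) freealg set)"
      unfolding Fiso_image[OF alg] by (rule assms)
    then obtain f :: "('x,'m,'r) freealg" where "f \<in> freeF" "\<theta> (e x) = Fiso sc e f" by (rule imageE)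
    then show "\<exists>f::('x,'m,'r) freealg. f \<in> freeF \<and> Fiso sc e f = \<theta> (e x)" by (intro exI[of _ f]) simp
  qed
  then obtain f where f: "\<forall>x. f x \<in> (freeF :: ('x,'m,'r) freealg set) \<and> Fiso sc e (f x) = \<theta> (e x)"
    by (rule choice[THEN exE])
  obtain \<phi> :: "('x,'m,'r) freealg \<Rightarrow> ('x,'m,'r) freealg"
    where h: "Mhom fsmult fmult fsmult fmult \<phi>" and g: "\<forall>x. \<phi> (fgen x) = f x"
    using ext_exists[OF Malg_free, of f] by (elim exE conjE)
  show ?thesis
    by (rule exI[of _ \<phi>]) (simp add: h g f)
qed

lemma tilde_eq:
  assumes "Pt \<theta> \<phi>"
  shows "T \<theta> = \<phi>"
  unfolding tilde_def
  by (rule the_equality) (use assms Pt_unique in blast)+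

lemma tilde_P:
  assumes "\<And>x. \<theta> (e x) \<in> Rspan sc e"
  shows "Pt \<theta> (T \<theta>)"
proof -
  obtain \<phi> where p: "Pt \<theta> \<phi>" using Pt_exists[of \<theta>, OF assms] by (elim exE)
  show ?thesis using p tilde_eq[OF p] by simp
qed

lemma MautF_D:
  assumes "\<theta> \<in> MautF sc mul (Rspan sc e)"
  shows "Mhom sc mul sc mul \<theta>" "bij \<theta>" "\<theta> ` Rspan sc e = Rspan sc e" "\<And>x. \<theta> (e x) \<in> Rspan sc e"
proof -
  show 1: "Mhom sc mul sc mul \<theta>" "bij \<theta>" and 2: "\<theta> ` Rspan sc e = Rspan sc e"
    using assms unfolding MautF_def Maut_def by auto
  fix x
  have "\<theta> (e x) \<in> \<theta> ` Rspan sc e" using e_Rspan[OF alg, of e x] by (rule imageI)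
  then show "\<theta> (e x) \<in> Rspan sc e" unfolding 2 .
qed

lemma key:
  assumes h: "Mhom fsmult fmult sc mul \<eta>" and g: "\<And>x. \<eta> (fgen x) = e x"
    and th: "Mhom sc mul sc mul \<theta>" and r: "\<And>x. \<theta> (e x) \<in> Rspan sc e"
  shows "\<eta> \<circ> T \<theta> = \<theta> \<circ> \<eta>"
proof (rule Mgen_eq[OF free_gen])
  have P: "Pt \<theta> (T \<theta>)" using tilde_P r by blast
  show "Mhom fsmult fmult sc mul (\<eta> \<circ> T \<theta>)" using P h by (blast intro: Mhom_comp)
  show "Mhom fsmult fmult sc mul (\<theta> \<circ> \<eta>)" using th h by (blast intro: Mhom_comp)
  fix s assume "s \<in> range (fgen :: _ \<Rightarrow> ('x,'m,'r) freealg)"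
  then obtain x where s: "s = fgen x" by blast
  show "(\<eta> \<circ> T \<theta>) s = (\<theta> \<circ> \<eta>) s"
    using P Fiso_eta[OF alg h g] by (simp add: s g)
qed

lemma T_comp:
  assumes a: "\<theta> \<in> MautF sc mul (Rspan sc e)" and b: "\<theta>' \<in> MautF sc mul (Rspan sc e)"
  shows "T (\<theta> \<circ> \<theta>') = T \<theta> \<circ> T \<theta>'"
proof (rule tilde_eq)
  obtain \<eta> :: "('x,'m,'r) freealg \<Rightarrow> 'a" where h: "Mhom fsmult fmult sc mul \<eta>" and g: "\<And>x. \<eta> (fgen x) = e x"
    using ext_exists[OF alg] by blast
  have Pa: "Pt \<theta> (T \<theta>)" and Pb: "Pt \<theta>' (T \<theta>')" using tilde_P MautF_D a b by blast+
  have im: "T \<theta> ` freeF \<subseteq> freeF" using Pa Mhom_freeF by blast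
  have k: "\<eta> \<circ> T \<theta> = \<theta> \<circ> \<eta>" using key[OF h g] MautF_D[OF a] by blast
  show "Pt (\<theta> \<circ> \<theta>') (T \<theta> \<circ> T \<theta>')"
  proof (intro conjI allI)
    show "Mhom fsmult fmult fsmult fmult (T \<theta> \<circ> T \<theta>')" using Pa Pb by (blast intro: Mhom_comp)
    fix x
    have f1: "T \<theta>' (fgen x) \<in> freeF" using Pb by blast
    then have f2: "T \<theta> (T \<theta>' (fgen x)) \<in> freeF" using im by blast
    then show "(T \<theta> \<circ> T \<theta>') (fgen x) \<in> freeF" by simp
    have "Fiso sc e (T \<theta> (T \<theta>' (fgen x))) = \<eta> (T \<theta> (T \<theta>' (fgen x)))"
      using Fiso_eta[OF alg h g f2] by simp
    also have "\<dots> = \<theta> (\<eta> (T \<theta>' (fgen x)))" using k by (metis comp_apply)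
    also have "\<dots> = \<theta> (\<theta>' (e x))" using Fiso_eta[OF alg h g f1] Pb by simp
    finally show "Fiso sc e ((T \<theta> \<circ> T \<theta>') (fgen x)) = (\<theta> \<circ> \<theta>') (e x)" by simp
  qed
qed

lemma T_id: "T id = id"
  by (rule tilde_eq) (simp add: Mhom_id freeF_fgen Fiso_fgen[OF alg])

lemma MautF_inv:
  assumes a: "\<theta> \<in> MautF sc mul (Rspan sc e)"
  shows "inv \<theta> \<in> MautF sc mul (Rspan sc e)" "\<theta> \<circ> inv \<theta> = id" "inv \<theta> \<circ> \<theta> = id"
proof -
  note d = MautF_D[OF a]
  have "inv \<theta> ` Rspan sc e = Rspan sc e"
    using d(3) d(2) by (metis bij_is_inj image_inv_f_f)
  then show "inv \<theta> \<in> MautF sc mul (Rspan sc e)"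
    unfolding MautF_def Maut_def using Mhom_inv[OF d(1) d(2)] bij_imp_bij_inv[OF d(2)] by simp
  show "\<theta> \<circ> inv \<theta> = id" by (rule surj_iff[THEN iffD1, OF bij_is_surj[OF d(2)]])
  show "inv \<theta> \<circ> \<theta> = id" by (rule inj_iff[THEN iffD1, OF bij_is_inj[OF d(2)]])
qed

lemma T_MautF:
  assumes a: "\<theta> \<in> MautF sc mul (Rspan sc e)"
  shows "T \<theta> \<in> MautF fsmult fmult freeF" "T \<theta> \<circ> T (inv \<theta>) = id" "T (inv \<theta>) \<circ> T \<theta> = id"
proof -
  note i = MautF_inv[OF a]
  show 1: "T \<theta> \<circ> T (inv \<theta>) = id" using T_comp[OF a i(1)] i(2) T_id by simp
  show 2: "T (inv \<theta>) \<circ> T \<theta> = id" using T_comp[OF i(1) a] i(3) T_id by simp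
  have Pa: "Pt \<theta> (T \<theta>)" and Pb: "Pt (inv \<theta>) (T (inv \<theta>))" using tilde_P MautF_D a i(1) by blast+
  have b: "bij (T \<theta>)" using 1 2 o_bij by blast
  have "T \<theta> ` freeF \<subseteq> freeF" "T (inv \<theta>) ` freeF \<subseteq> freeF" using Pa Pb Mhom_freeF by blast+
  moreover have "f = T \<theta> (T (inv \<theta>) f)" for f using 1 by (metis comp_apply id_apply)
  ultimately have "T \<theta> ` freeF = freeF" by blast
  then show "T \<theta> \<in> MautF fsmult fmult freeF"
    unfolding MautF_def Maut_def using Pa b by blast
qed

lemma T_inj: "inj_on T (MautF sc mul (Rspan sc e))"
proof (rule inj_onI)
  fix \<theta> \<theta>' assume a: "\<theta> \<in> MautF sc mul (Rspan sc e)" and b: "\<theta>' \<in> MautF sc mul (Rspan sc e)"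
    and eq: "T \<theta> = T \<theta>'"
  have Pa: "Pt \<theta> (T \<theta>)" and Pb: "Pt \<theta>' (T \<theta>')" using tilde_P MautF_D a b by blast+
  have "\<theta> (e x) = \<theta>' (e x)" for x using Pa Pb eq by metis
  then show "\<theta> = \<theta>'"
    using Mgen_eq[OF gen_range[OF gen]] MautF_D(1)[OF a] MautF_D(1)[OF b] by blast
qed

end



context
  fixes sc :: "'r::comm_ring_1 \<Rightarrow> 'a::ab_group_add \<Rightarrow> 'a" and mul :: "'m \<Rightarrow> 'a \<Rightarrow> 'a \<Rightarrow> 'a"
    and e :: "'x \<Rightarrow> 'a"
  assumes alg: "Malg sc mul" and indep: "Rindep sc e"
    and gen: "Mgenerated sc mul (Rspan sc e) = UNIV"
begin

abbreviation TT :: "('a \<Rightarrow> 'a) \<Rightarrow> ('x,'m,'r) freealg \<Rightarrow> ('x,'m,'r) freealg" where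
  "TT \<theta> \<equiv> tilde sc e \<theta>"

lemma part2: "\<exists>!\<eta> :: ('x, 'm, 'r) freealg \<Rightarrow> 'a.
            Mhom fsmult fmult sc mul \<eta> \<and> surj \<eta> \<and> (\<forall>x. \<eta> (fgen x) = e x)"
proof -
  obtain \<eta> :: "('x,'m,'r) freealg \<Rightarrow> 'a" where h: "Mhom fsmult fmult sc mul \<eta>" and g: "\<forall>x. \<eta> (fgen x) = e x"
    using ext_exists[OF alg] by blast
  have s: "surj \<eta>"
    by (rule Mgen_surj[OF gen_range[OF gen] h]) (use g in \<open>metis image_subsetI rangeE rangeI\<close>)
  show ?thesis
  proof (rule ex1I[of _ \<eta>])
    show "Mhom fsmult fmult sc mul \<eta> \<and> surj \<eta> \<and> (\<forall>x. \<eta> (fgen x) = e x)" using h s g by blast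
    fix \<eta>' :: "('x,'m,'r) freealg \<Rightarrow> 'a"
    assume a: "Mhom fsmult fmult sc mul \<eta>' \<and> surj \<eta>' \<and> (\<forall>x. \<eta>' (fgen x) = e x)"
    show "\<eta>' = \<eta>"
    proof (rule Mgen_eq[OF free_gen _ h])
      show "Mhom fsmult fmult sc mul \<eta>'" using a by blast
      fix s assume "s \<in> range (fgen :: 'x \<Rightarrow> ('x,'m,'r) freealg)"
      then obtain x where "s = fgen x" by blast
      then show "\<eta>' s = \<eta> s" using a g by simp
    qed
  qed
qed

lemma part3:
  assumes h: "Mhom fsmult fmult sc mul (\<eta> :: ('x, 'm, 'r) freealg \<Rightarrow> 'a)" and s: "surj \<eta>"
    and g: "\<forall>x. \<eta> (fgen x) = e x"
  shows "TT ` MautF sc mul (Rspan sc e)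
              = {\<phi> \<in> MautF fsmult fmult freeF. \<phi> ` {f. \<eta> f = 0} = {f. \<eta> f = 0}}"
proof (intro set_eqI iffI)
  fix \<phi> assume "\<phi> \<in> TT ` MautF sc mul (Rspan sc e)"
  then obtain \<theta> where a: "\<theta> \<in> MautF sc mul (Rspan sc e)" and \<phi>: "\<phi> = TT \<theta>" by blast
  note i = MautF_inv[OF alg indep gen a]
  note t = T_MautF[OF alg indep gen a]
  have k1: "\<eta> \<circ> TT \<theta> = \<theta> \<circ> \<eta>" using key[OF alg indep gen h] g MautF_D[OF alg indep gen a] by blast
  have k2: "\<eta> \<circ> TT (inv \<theta>) = inv \<theta> \<circ> \<eta>"
    using key[OF alg indep gen h] g MautF_D[OF alg indep gen i(1)] by blast
  have z1: "\<theta> 0 = 0" "inv \<theta> 0 = 0"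
    using Mhom_zero MautF_D(1)[OF alg indep gen a] MautF_D(1)[OF alg indep gen i(1)] by blast+
  have "\<phi> ` {f. \<eta> f = 0} \<subseteq> {f. \<eta> f = 0}"
    using k1 z1 unfolding \<phi> by (auto simp: fun_eq_iff)
  moreover have "{f. \<eta> f = 0} \<subseteq> \<phi> ` {f. \<eta> f = 0}"
  proof
    fix f assume f: "f \<in> {f. \<eta> f = 0}"
    have "f = \<phi> (TT (inv \<theta>) f)" using t(2) unfolding \<phi> by (metis comp_apply id_apply)
    moreover have "\<eta> (TT (inv \<theta>) f) = 0" using k2 z1 f by (metis comp_apply mem_Collect_eq)
    ultimately show "f \<in> \<phi> ` {f. \<eta> f = 0}" by blast
  qed
  ultimately show "\<phi> \<in> {\<phi> \<in> MautF fsmult fmult freeF. \<phi> ` {f. \<eta> f = 0} = {f. \<eta> f = 0}}"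
    using t(1) \<phi> by blast
next
  fix \<phi> assume "\<phi> \<in> {\<phi> \<in> MautF fsmult fmult freeF. \<phi> ` {f. \<eta> f = 0} = {f. \<eta> f = 0}}"
  then have ph: "Mhom fsmult fmult fsmult fmult \<phi>" and b: "bij \<phi>" and F: "\<phi> ` freeF = freeF"
    and I: "\<phi> ` {f. \<eta> f = 0} = {f. \<eta> f = 0}"
    unfolding MautF_def Maut_def by auto
  define \<theta> where "\<theta> a = \<eta> (\<phi> (SOME f. \<eta> f = a))" for a
  have wd: "\<eta> (\<phi> f) = \<eta> (\<phi> g)" if "\<eta> f = \<eta> g" for f g
  proof -
    have "\<eta> (f - g) = 0" using that Mhom_diff[OF h] by simp
    then have "\<phi> (f - g) \<in> {f. \<eta> f = 0}" using I by blast
    then show ?thesis using Mhom_diff[OF h] Mhom_diff[OF ph] by simp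
  qed
  have th: "\<theta> (\<eta> f) = \<eta> (\<phi> f)" for f
    unfolding \<theta>_def by (rule wd) (rule someI[of "\<lambda>g. \<eta> g = \<eta> f" f], rule refl)
  have pre: "\<exists>f. a = \<eta> f" for a using s by (metis surj_def)
  have hom: "Mhom sc mul sc mul \<theta>"
    unfolding Mhom_def
  proof (intro conjI allI)
    fix a b r m
    obtain f where ab1: "a = \<eta> f" using pre[of a] by (elim exE)
    obtain g where ab2: "b = \<eta> g" using pre[of b] by (elim exE)
    note ab = ab1 ab2
    show "\<theta> (a + b) = \<theta> a + \<theta> b"
    proof -
      have "\<theta> (\<eta> (f + g)) = \<eta> (\<phi> (f + g))" by (rule th)
      also have "\<dots> = \<eta> (\<phi> f) + \<eta> (\<phi> g)" by (simp only: Mhom_add[OF ph] Mhom_add[OF h])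
      finally show ?thesis by (simp only: ab th Mhom_add[OF h, symmetric])
    qed
    show "\<theta> (sc r a) = sc r (\<theta> a)"
    proof -
      have "\<theta> (\<eta> (fsmult r f)) = \<eta> (\<phi> (fsmult r f))" by (rule th)
      also have "\<dots> = sc r (\<eta> (\<phi> f))" by (simp only: Mhom_sc[OF ph] Mhom_sc[OF h])
      finally show ?thesis by (simp only: ab th Mhom_sc[OF h, symmetric])
    qed
    show "\<theta> (mul m a b) = mul m (\<theta> a) (\<theta> b)"
    proof -
      have "\<theta> (\<eta> (fmult m f g)) = \<eta> (\<phi> (fmult m f g))" by (rule th)
      also have "\<dots> = mul m (\<eta> (\<phi> f)) (\<eta> (\<phi> g))" by (simp only: Mhom_mul[OF ph] Mhom_mul[OF h])
      finally show ?thesis by (simp only: ab th Mhom_mul[OF h, symmetric])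
    qed
  qed
  have inj: "inj \<theta>"
  proof (rule injI)
    fix a b assume eq: "\<theta> a = \<theta> b"
    obtain f where ab1: "a = \<eta> f" using pre[of a] by (elim exE)
    obtain g where ab2: "b = \<eta> g" using pre[of b] by (elim exE)
    note ab = ab1 ab2
    have "\<eta> (\<phi> (f - g)) = 0" using eq Mhom_diff[OF h] Mhom_diff[OF ph] by (simp add: ab th)
    then have "\<phi> (f - g) \<in> \<phi> ` {f. \<eta> f = 0}" using I by blast
    then have "f - g \<in> {f. \<eta> f = 0}" using b by (metis bij_is_inj inj_image_mem_iff)
    then show "a = b" using Mhom_diff[OF h] by (simp add: ab)
  qed
  have sur: "surj \<theta>"
  proof -
    have "a \<in> range \<theta>" for a
    proof -
      obtain g where "a = \<eta> g" using pre[of a] by (elim exE)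
      moreover obtain f where "g = \<phi> f" using b by (metis bij_pointE)
      ultimately show ?thesis using th by (metis rangeI)
    qed
    then show ?thesis by blast
  qed
  have sp: "\<eta> ` freeF = Rspan sc e" using eta_image[OF alg h] g by blast
  have "\<theta> ` Rspan sc e = \<eta> ` \<phi> ` freeF" unfolding sp[symmetric] image_image th ..
  then have img: "\<theta> ` Rspan sc e = Rspan sc e" using F sp by simp
  have a: "\<theta> \<in> MautF sc mul (Rspan sc e)"
    unfolding MautF_def Maut_def using hom inj sur img by (simp add: bij_def)
  have "TT \<theta> = \<phi>"
  proof (rule tilde_eq[OF alg indep gen])
    show "Pt sc e \<theta> \<phi>"
    proof (intro conjI allI)
      show "Mhom fsmult fmult fsmult fmult \<phi>" by (rule ph)
      fix x
      have "\<phi> (fgen x) \<in> \<phi> ` freeF" by (rule imageI[OF freeF_fgen])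
      then show f: "\<phi> (fgen x) \<in> freeF" by (simp only: F)
      have "Fiso sc e (\<phi> (fgen x)) = \<eta> (\<phi> (fgen x))"
        using Fiso_eta[OF alg h _ f] g by simp
      also have "\<dots> = \<theta> (\<eta> (fgen x))" by (rule th[symmetric])
      also have "\<dots> = \<theta> (e x)" using g by simp
      finally show "Fiso sc e (\<phi> (fgen x)) = \<theta> (e x)" .
    qed
  qed
  then show "\<phi> \<in> TT ` MautF sc mul (Rspan sc e)" using a by blast
qed

end


theorem proposition2:
  fixes sc :: "'r::comm_ring_1 \<Rightarrow> 'a::ab_group_add \<Rightarrow> 'a"
    and mul :: "'m \<Rightarrow> 'a \<Rightarrow> 'a \<Rightarrow> 'a"
    and e :: "'x \<Rightarrow> 'a"
  assumes alg: "Malg sc mul"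
    and indep: "Rindep sc e"
    and gen: "Mgenerated sc mul (Rspan sc e) = UNIV"
  shows "(\<forall>\<theta>\<in>MautF sc mul (Rspan sc e).
            tilde sc e \<theta> \<in> MautF fsmult fmult (freeF :: ('x, 'm, 'r) freealg set))
       \<and> (\<forall>\<theta>\<in>MautF sc mul (Rspan sc e). \<forall>\<theta>'\<in>MautF sc mul (Rspan sc e).
            (tilde sc e (\<theta> \<circ> \<theta>') :: ('x, 'm, 'r) freealg \<Rightarrow> _) = tilde sc e \<theta> \<circ> tilde sc e \<theta>')
       \<and> inj_on (tilde sc e :: _ \<Rightarrow> ('x, 'm, 'r) freealg \<Rightarrow> _) (MautF sc mul (Rspan sc e))
       \<and> (\<exists>!\<eta> :: ('x, 'm, 'r) freealg \<Rightarrow> 'a.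
            Mhom fsmult fmult sc mul \<eta> \<and> surj \<eta> \<and> (\<forall>x. \<eta> (fgen x) = e x))
       \<and> (\<forall>\<eta> :: ('x, 'm, 'r) freealg \<Rightarrow> 'a.
            Mhom fsmult fmult sc mul \<eta> \<and> surj \<eta> \<and> (\<forall>x. \<eta> (fgen x) = e x) \<longrightarrow>
            tilde sc e ` MautF sc mul (Rspan sc e)
              = {\<phi> \<in> MautF fsmult fmult freeF. \<phi> ` {f. \<eta> f = 0} = {f. \<eta> f = 0}})"
proof -
  note alg indep gen
  show ?thesis
  proof (intro conjI ballI allI impI)
    fix \<theta> assume a: "\<theta> \<in> MautF sc mul (Rspan sc e)"
    show "tilde sc e \<theta> \<in> MautF fsmult fmult (freeF :: ('x, 'm, 'r) freealg set)"
      using T_MautF[OF alg indep gen a] by blast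
  next
    fix \<theta> \<theta>' assume a: "\<theta> \<in> MautF sc mul (Rspan sc e)" and b: "\<theta>' \<in> MautF sc mul (Rspan sc e)"
    show "(tilde sc e (\<theta> \<circ> \<theta>') :: ('x, 'm, 'r) freealg \<Rightarrow> _) = tilde sc e \<theta> \<circ> tilde sc e \<theta>'"
      using T_comp[OF alg indep gen a b] by blast
  next
    show "inj_on (tilde sc e :: _ \<Rightarrow> ('x, 'm, 'r) freealg \<Rightarrow> _) (MautF sc mul (Rspan sc e))"
      using T_inj[OF alg indep gen] by blast
  next
    show "\<exists>!\<eta> :: ('x, 'm, 'r) freealg \<Rightarrow> 'a.
            Mhom fsmult fmult sc mul \<eta> \<and> surj \<eta> \<and> (\<forall>x. \<eta> (fgen x) = e x)"
      by (rule part2[OF alg indep gen])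
  next
    fix \<eta> :: "('x, 'm, 'r) freealg \<Rightarrow> 'a"
    assume "Mhom fsmult fmult sc mul \<eta> \<and> surj \<eta> \<and> (\<forall>x. \<eta> (fgen x) = e x)"
    then show "tilde sc e ` MautF sc mul (Rspan sc e)
              = {\<phi> \<in> MautF fsmult fmult freeF. \<phi> ` {f. \<eta> f = 0} = {f. \<eta> f = 0}}"
      using part3[OF alg indep gen] by blast
  qed
qed

end
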